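(* Let $f\in C^1_c(\mathbb{R})$ be real-valued. For every $\varepsilon>0$ there exist $N\in\mathbb{N}$, $c_1,\dots,c_N\in\mathbb{R}$ and $\eta_1,\dots,\eta_N\in\mathbb{C}$ with $\operatorname{Im}\eta_j>0$ such that $$\left\|f-\sum_{j=1}^Nc_j\operatorname{Im}\frac{1}{\cdot-\eta_j}\right\|_{\mathcal{L}_w}<\varepsilon.$$
   Context: $\mathcal{L}_w$ is the space of functions $f:\mathbb{R}\to\mathbb{R}$ with $\lim_{x\to-\infty}f(x)=0$ and $\|f\|_{\mathcal{L}_w}:=\sup_{x\ne y}\sqrt{1+x^2}\sqrt{1+y^2}\left|\frac{f(x)-f(y)}{x-y}\right|<\infty$; it is a normed space with this norm. Here $\operatorname{Im}\frac{1}{\cdot-\eta}$ denotes the function $x\mapsto\operatorname{Im}\frac{1}{x-\eta}$. *)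

theory Defs
  imports "HOL-Analysis.Analysis"
begin

text \<open>The weighted Lipschitz seminorm of the space L_w, valued in extended reals
  (so that finiteness is part of any strict bound).\<close>
definition Lw_norm :: "(real \<Rightarrow> real) \<Rightarrow> ereal" where
  "Lw_norm f = (SUP p \<in> {(x, y). x \<noteq> (y::real)}.
      ereal (sqrt (1 + (fst p)\<^sup>2) * sqrt (1 + (snd p)\<^sup>2) *
             \<bar>(f (fst p) - f (snd p)) / (fst p - snd p)\<bar>))"

definition C1c :: "(real \<Rightarrow> real) \<Rightarrow> bool" where
  "C1c f \<longleftrightarrow> f C1_differentiable_on UNIV \<and> compact (closure {x. f x \<noteq> 0})"

end

theory Submission
  imports Defs "HOL-Real_Asymp.Real_Asymp"
begin

lemma sin_ge_half:
  fixes t :: real assumes "0 \<le> t" "t \<le> pi/2" shows "t/2 \<le> sin t"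
proof (cases "t \<le> pi/3")
  case True
  let ?f = "\<lambda>x. sin x - x/2"
  have "?f 0 \<le> ?f t"
  proof (rule DERIV_nonneg_imp_nondecreasing[OF assms(1)])
    fix u assume u: "0 \<le> u" "u \<le> t"
    have "cos (pi/3) \<le> cos u"
      using u True by (intro cos_monotone_0_pi_le) auto
    hence "1/2 \<le> cos u" by (simp add: cos_60)
    thus "\<exists>y. (?f has_real_derivative y) (at u) \<and> 0 \<le> y"
      by (intro exI[of _ "cos u - 1/2"]) (auto intro!: derivative_eq_intros)
  qed
  thus ?thesis by simp
next
  case False
  have "sin (pi/3) \<le> sin t"
    using False assms by (intro sin_monotone_2pi_le) auto
  moreover have "sin (pi/3) = sqrt 3 / 2" by (simp add: sin_60)
  moreover have "pi/4 \<le> sqrt 3 / 2"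
  proof -
    have "pi \<le> 3.2" using pi_approx by simp
    moreover have "1.6 \<le> sqrt 3" by (rule real_le_rsqrt) (simp add: power2_eq_square)
    ultimately show ?thesis by linarith
  qed
  ultimately show ?thesis using assms by linarith
qed

lemma sin_ge_min:
  fixes t :: real assumes "0 \<le> t" "t \<le> pi" shows "min t (pi - t) \<le> 2 * sin t"
proof (cases "t \<le> pi/2")
  case True thus ?thesis using sin_ge_half[of t] assms by simp
next
  case False
  have "(pi - t)/2 \<le> sin (pi - t)" using False assms by (intro sin_ge_half) auto
  thus ?thesis by simp
qed

lemma sin_arctan_diff:
  "sin (arctan y - arctan x) = (y - x) / (sqrt (1 + x\<^sup>2) * sqrt (1 + y\<^sup>2))"
  by (simp add: sin_diff sin_arctan cos_arctan diff_divide_distrib mult.commute)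

lemma arctan_bound:
  fixes \<phi> \<phi>' :: "real \<Rightarrow> real"
  assumes d: "\<And>x. (\<phi> has_real_derivative \<phi>' x) (at x)"
    and b: "\<And>x. (1 + x\<^sup>2) * \<bar>\<phi>' x\<bar> \<le> M" and xy: "x \<le> y"
  shows "\<bar>\<phi> y - \<phi> x\<bar> \<le> M * (arctan y - arctan x)"
proof -
  have pos: "0 < 1 + t\<^sup>2" for t :: real by (simp add: add_pos_nonneg)
  have b': "\<bar>\<phi>' t\<bar> \<le> M / (1 + t\<^sup>2)" for t
    using b[of t] pos[of t] by (simp add: field_simps)
  have 1: "(\<lambda>t. M * arctan t - \<phi> t) x \<le> (\<lambda>t. M * arctan t - \<phi> t) y"
  proof (rule DERIV_nonneg_imp_nondecreasing[OF xy])
    fix u show "\<exists>z. ((\<lambda>t. M * arctan t - \<phi> t) has_real_derivative z) (at u) \<and> 0 \<le> z"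
      using b'[of u] d[of u]
      by (intro exI[of _ "M / (1 + u\<^sup>2) - \<phi>' u"]) (auto intro!: derivative_eq_intros simp: field_simps)
  qed
  have 2: "(\<lambda>t. M * arctan t + \<phi> t) x \<le> (\<lambda>t. M * arctan t + \<phi> t) y"
  proof (rule DERIV_nonneg_imp_nondecreasing[OF xy])
    fix u show "\<exists>z. ((\<lambda>t. M * arctan t + \<phi> t) has_real_derivative z) (at u) \<and> 0 \<le> z"
      using b'[of u] d[of u]
      by (intro exI[of _ "M / (1 + u\<^sup>2) + \<phi>' u"]) (auto intro!: derivative_eq_intros simp: field_simps)
  qed
  from 1 2 show ?thesis by (simp add: algebra_simps abs_le_iff)
qed

lemma tail_top:
  fixes \<phi> \<phi>' :: "real \<Rightarrow> real"
  assumes d: "\<And>x. (\<phi> has_real_derivative \<phi>' x) (at x)"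
    and b: "\<And>x. (1 + x\<^sup>2) * \<bar>\<phi>' x\<bar> \<le> M" and l: "(\<phi> \<longlongrightarrow> 0) at_top"
  shows "\<bar>\<phi> x\<bar> \<le> M * (pi/2 - arctan x)"
proof -
  have "((\<lambda>y. \<bar>\<phi> y - \<phi> x\<bar>) \<longlongrightarrow> \<bar>0 - \<phi> x\<bar>) at_top"
    by (intro tendsto_intros l)
  moreover have "((\<lambda>y. M * (arctan y - arctan x)) \<longlongrightarrow> M * (pi/2 - arctan x)) at_top"
    by (intro tendsto_intros tendsto_arctan_at_top)
  moreover have "eventually (\<lambda>y. \<bar>\<phi> y - \<phi> x\<bar> \<le> M * (arctan y - arctan x)) at_top"
    using eventually_ge_at_top[of x] by eventually_elim (rule arctan_bound[OF d b])
  ultimately have "\<bar>0 - \<phi> x\<bar> \<le> M * (pi/2 - arctan x)" by (intro tendsto_le[of at_top]) auto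
  thus ?thesis by simp
qed

lemma tail_bot:
  fixes \<phi> \<phi>' :: "real \<Rightarrow> real"
  assumes d: "\<And>x. (\<phi> has_real_derivative \<phi>' x) (at x)"
    and b: "\<And>x. (1 + x\<^sup>2) * \<bar>\<phi>' x\<bar> \<le> M" and l: "(\<phi> \<longlongrightarrow> 0) at_bot"
  shows "\<bar>\<phi> x\<bar> \<le> M * (arctan x + pi/2)"
proof -
  have "((\<lambda>y. \<bar>\<phi> x - \<phi> y\<bar>) \<longlongrightarrow> \<bar>\<phi> x - 0\<bar>) at_bot"
    by (intro tendsto_intros l)
  moreover have "((\<lambda>y. M * (arctan x - arctan y)) \<longlongrightarrow> M * (arctan x - - (pi/2))) at_bot"
    by (intro tendsto_intros tendsto_arctan_at_bot)
  moreover have "eventually (\<lambda>y. \<bar>\<phi> x - \<phi> y\<bar> \<le> M * (arctan x - arctan y)) at_bot"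
    using eventually_le_at_bot[of x] by eventually_elim (rule arctan_bound[OF d b])
  ultimately have "\<bar>\<phi> x - 0\<bar> \<le> M * (arctan x - - (pi/2))" by (intro tendsto_le[of at_bot]) auto
  thus ?thesis by simp
qed

lemma Lw_bound:
  fixes h h' :: "real \<Rightarrow> real"
  assumes d: "\<And>x. (h has_real_derivative h' x) (at x)"
    and b: "\<And>x. (1 + x\<^sup>2) * \<bar>h' x\<bar> \<le> M"
    and lt: "(h \<longlongrightarrow> 0) at_top" and lb: "(h \<longlongrightarrow> 0) at_bot"
  shows "Lw_norm h \<le> ereal (2 * M)"
proof -
  have M0: "0 \<le> M" using b[of 0] abs_ge_zero[of "h' 0"] by simp
  have key: "sqrt (1 + x\<^sup>2) * sqrt (1 + y\<^sup>2) * \<bar>(h x - h y) / (x - y)\<bar> \<le> 2 * M"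
    if xy: "x < y" for x y
  proof -
    define t where "t = arctan y - arctan x"
    have t0: "0 \<le> t" using xy arctan_le_iff[of x y] unfolding t_def by linarith
    have tpi: "t \<le> pi" using arctan_lbound[of x] arctan_ubound[of y] unfolding t_def by linarith
    have a1: "\<bar>h y - h x\<bar> \<le> M * t" unfolding t_def using arctan_bound[OF d b] xy by simp
    have a2: "\<bar>h y - h x\<bar> \<le> M * (pi - t)"
    proof -
      have "\<bar>h y\<bar> \<le> M * (pi/2 - arctan y)" by (rule tail_top[OF d b lt])
      moreover have "\<bar>h x\<bar> \<le> M * (arctan x + pi/2)" by (rule tail_bot[OF d b lb])
      ultimately have "\<bar>h y - h x\<bar> \<le> M * (pi/2 - arctan y) + M * (arctan x + pi/2)" by linarith
      also have "\<dots> = M * (pi - t)" by (simp add: t_def algebra_simps)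
      finally show ?thesis .
    qed
    have "\<bar>h y - h x\<bar> \<le> M * min t (pi - t)" using a1 a2 by (simp add: min_def)
    also have "\<dots> \<le> M * (2 * sin t)" using sin_ge_min[OF t0 tpi] M0 by (rule mult_left_mono)
    finally have 1: "\<bar>h y - h x\<bar> \<le> 2 * M * ((y - x) / (sqrt (1 + x\<^sup>2) * sqrt (1 + y\<^sup>2)))"
      by (simp add: t_def sin_arctan_diff algebra_simps)
    define Q where "Q = sqrt (1 + x\<^sup>2) * sqrt (1 + y\<^sup>2)"
    have Q: "0 < Q" by (simp add: Q_def add_pos_nonneg)
    have yx: "0 < y - x" using xy by simp
    have "Q * \<bar>(h x - h y) / (x - y)\<bar> = Q * (\<bar>h y - h x\<bar> / (y - x))"
      using yx by (simp add: abs_minus_commute abs_divide)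
    also have "\<dots> = \<bar>h y - h x\<bar> * (Q / (y - x))" by simp
    also have "\<dots> \<le> 2 * M * ((y - x) / Q) * (Q / (y - x))"
      using 1 Q yx unfolding Q_def[symmetric] by (intro mult_right_mono) auto
    also have "\<dots> = 2 * M" using Q yx by simp
    finally show ?thesis by (simp add: Q_def)
  qed
  show ?thesis unfolding Lw_norm_def
  proof (rule SUP_least)
    fix p :: "real \<times> real" assume "p \<in> {(x, y). x \<noteq> y}"
    then obtain x y where p: "p = (x, y)" "x \<noteq> y" by auto
    show "ereal (sqrt (1 + (fst p)\<^sup>2) * sqrt (1 + (snd p)\<^sup>2) * \<bar>(h (fst p) - h (snd p)) / (fst p - snd p)\<bar>) \<le> ereal (2 * M)"
    proof (cases "x < y")
      case True thus ?thesis using key[OF True] p by simp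
    next
      case False
      hence "y < x" using p by simp
      have e: "(h x - h y)/(x-y) = (h y - h x)/(y - x)"
        by (metis minus_diff_eq minus_divide_divide)
      from key[OF \<open>y < x\<close>] show ?thesis using p
        by (simp add: e mult.commute)
    qed
  qed
qed

definition W :: "real \<Rightarrow> complex" where
  "W x = (1 + \<i> * of_real x) / (1 - \<i> * of_real x)"

lemma den_ne: "1 - \<i> * complex_of_real x \<noteq> 0"
  by (simp add: complex_eq_iff)

lemma den_ne': "1 + \<i> * complex_of_real x \<noteq> 0"
  by (simp add: complex_eq_iff)

lemma onepx: "0 < 1 + x\<^sup>2" for x :: real
  by (simp add: add_pos_nonneg)

lemma Re_W: "Re (W x) = (1 - x\<^sup>2) / (1 + x\<^sup>2)"
  by (simp add: W_def Re_divide power2_eq_square)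

lemma Im_W: "Im (W x) = 2 * x / (1 + x\<^sup>2)"
  by (simp add: W_def Im_divide power2_eq_square)

lemma norm_W [simp]: "cmod (W x) = 1"
proof -
  have "cmod (1 + \<i> * complex_of_real x) = cmod (1 - \<i> * complex_of_real x)"
    by (simp add: cmod_def)
  thus ?thesis using den_ne[of x] by (simp add: W_def norm_divide)
qed

lemma W_ne: "W x \<noteq> -1"
proof
  assume "W x = -1"
  hence "Re (W x) = -1" by simp
  thus False using onepx[of x] by (simp add: Re_W field_simps)
qed

definition xof :: "complex \<Rightarrow> real" where "xof w = Im w / (1 + Re w)"

lemma xof_W [simp]: "xof (W x) = x"
  using onepx[of x] by (simp add: xof_def Re_W Im_W field_simps power2_eq_square)

lemma W_top: "(W \<longlongrightarrow> -1) at_top"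
proof -
  have "((\<lambda>x. Re (W x)) \<longlongrightarrow> -1) at_top" unfolding Re_W by real_asymp
  moreover have "((\<lambda>x. Im (W x)) \<longlongrightarrow> 0) at_top" unfolding Im_W by real_asymp
  ultimately show ?thesis by (simp add: tendsto_complex_iff)
qed

lemma W_bot: "(W \<longlongrightarrow> -1) at_bot"
proof -
  have "((\<lambda>x. Re (W x)) \<longlongrightarrow> -1) at_bot" unfolding Re_W by real_asymp
  moreover have "((\<lambda>x. Im (W x)) \<longlongrightarrow> 0) at_bot" unfolding Im_W by real_asymp
  ultimately show ?thesis by (simp add: tendsto_complex_iff)
qed

lemma W_deriv:
  assumes "(R has_field_derivative R') (at (W x))"
  shows "((\<lambda>x. R (W x)) has_vector_derivative R' * (2 * \<i> * W x / (1 + x\<^sup>2))) (at x)"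
proof -
  define Wc where "Wc = (\<lambda>z::complex. (1 + \<i> * z) / (1 - \<i> * z))"
  have d1: "(Wc has_field_derivative 2 * \<i> / (1 - \<i> * of_real x)\<^sup>2) (at (of_real x))"
    unfolding Wc_def using den_ne[of x]
    by (auto intro!: derivative_eq_intros simp: field_simps power2_eq_square)
  have "W x = Wc (of_real x)" by (simp add: W_def Wc_def)
  hence d2: "((\<lambda>z. R (Wc z)) has_field_derivative R' * (2 * \<i> / (1 - \<i> * of_real x)\<^sup>2)) (at (of_real x))"
    using DERIV_chain2[OF assms[unfolded \<open>W x = Wc (of_real x)\<close>] d1] by simp
  have e: "2 * \<i> / (1 - \<i> * complex_of_real x)\<^sup>2 = 2 * \<i> * W x / (1 + (complex_of_real x)\<^sup>2)"
  proof -
    have 1: "(1 + (complex_of_real x)\<^sup>2) = (1 - \<i> * of_real x) * (1 + \<i> * of_real x)"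
      by (simp add: algebra_simps power2_eq_square)
    have 2: "\<And>a b::complex. a \<noteq> 0 \<Longrightarrow> b \<noteq> 0 \<Longrightarrow> 2*\<i>/a\<^sup>2 = 2*\<i>*(b/a)/(a*b)"
      by (simp add: field_simps power2_eq_square)
    show ?thesis unfolding 1 W_def by (rule 2[OF den_ne den_ne'])
  qed
  have "((\<lambda>x. R (Wc (of_real x))) has_vector_derivative R' * (2 * \<i> / (1 - \<i> * of_real x)\<^sup>2)) (at x)"
    by (rule has_vector_derivative_real_field[OF d2])
  moreover have "(\<lambda>x. R (Wc (of_real x))) = (\<lambda>x. R (W x))" by (simp add: W_def Wc_def)
  ultimately show ?thesis by (simp add: e)
qed

lemma Re_W_deriv:
  assumes "(R has_field_derivative R') (at (W x))"
  shows "((\<lambda>x. Re (R (W x))) has_real_derivative Re (R' * (2 * \<i> * W x)) / (1 + x\<^sup>2)) (at x)"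
proof -
  have "((\<lambda>x. Re (R (W x))) has_real_derivative Re (R' * (2 * \<i> * W x / (1 + x\<^sup>2)))) (at x)"
    by (rule has_field_derivative_Re[OF W_deriv[OF assms]])
  moreover have "Re (R' * (2 * \<i> * W x / complex_of_real (1 + x\<^sup>2))) = Re (R' * (2 * \<i> * W x)) / (1 + x\<^sup>2)"
    by (metis Re_divide_of_real times_divide_eq_right)
  ultimately show ?thesis by simp
qed

inductive trigp :: "(complex \<Rightarrow> real) \<Rightarrow> bool" where
  gen: "trigp (\<lambda>w. Re (a * w ^ k))"
| add: "trigp f \<Longrightarrow> trigp g \<Longrightarrow> trigp (\<lambda>w. f w + g w)"

lemma trigp_cont: "trigp g \<Longrightarrow> continuous_on S g"
  by (induction rule: trigp.induct) (auto intro!: continuous_intros)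

lemma trigp_const: "trigp (\<lambda>w. c)"
  using trigp.gen[of "complex_of_real c" 0] by simp

lemma cnj_unit: "cmod w = 1 \<Longrightarrow> w * cnj w = 1"
  using complex_norm_square[of w] by simp

lemma Re_mult_Re: "Re A * Re B = (Re (A * B) + Re (A * cnj B)) / 2"
  by simp

lemma gen_mult:
  assumes w: "cmod w = 1"
  shows "Re (a * w ^ k) * Re (b * w ^ l) =
    Re ((a * b / 2) * w ^ (k + l)) +
    Re ((if l \<le> k then a * cnj b / 2 else cnj a * b / 2) * w ^ (if l \<le> k then k - l else l - k))"
proof -
  have wc: "w * cnj w = 1" by (rule cnj_unit[OF w])
  have "Re (a * w ^ k) * Re (b * w ^ l) = (Re (a * b * w ^ (k + l)) + Re (a * cnj b * (w ^ k * cnj w ^ l))) / 2"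
    by (subst Re_mult_Re) (simp add: power_add mult_ac)
  moreover have "Re (a * cnj b * (w ^ k * cnj w ^ l)) =
      Re ((if l \<le> k then a * cnj b else cnj a * b) * w ^ (if l \<le> k then k - l else l - k))"
  proof (cases "l \<le> k")
    case True
    have "w ^ k * cnj w ^ l = w ^ (k - l) * (w * cnj w) ^ l"
      using True by (simp add: power_mult_distrib power_add[symmetric])
    thus ?thesis using True wc by simp
  next
    case False
    have "w ^ k * cnj w ^ l = cnj w ^ (l - k) * (w * cnj w) ^ k"
      using False by (simp add: power_mult_distrib power_add[symmetric] mult.commute)
    hence "a * cnj b * (w ^ k * cnj w ^ l) = cnj (cnj a * b * w ^ (l - k))"
      using wc by simp
    hence "Re (a * cnj b * (w ^ k * cnj w ^ l)) = Re (cnj a * b * w ^ (l - k))"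
      by (metis cnj.sel(1))
    thus ?thesis using False by simp
  qed
  moreover have "\<And>z y. Re ((z / 2) * y) = Re (z * y) / 2"
    by (metis Re_divide_numeral times_divide_eq_left)
  ultimately show ?thesis
    by (cases "l \<le> k") (simp_all add: add_divide_distrib)
qed

lemma trigp_mult_gen:
  assumes "trigp g"
  shows "\<exists>h. trigp h \<and> (\<forall>w. cmod w = 1 \<longrightarrow> Re (a * w ^ k) * g w = h w)"
  using assms
proof (induction rule: trigp.induct)
  case (gen b l)
  show ?case
    by (rule exI, rule conjI[OF trigp.add[OF trigp.gen trigp.gen]], intro allI impI, rule gen_mult)
next
  case (add f g)
  then obtain h1 h2 where "trigp h1" "\<forall>w. cmod w = 1 \<longrightarrow> Re (a * w ^ k) * f w = h1 w"
    "trigp h2" "\<forall>w. cmod w = 1 \<longrightarrow> Re (a * w ^ k) * g w = h2 w" by blast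
  thus ?case by (intro exI[of _ "\<lambda>w. h1 w + h2 w"]) (auto intro: trigp.add simp: distrib_left)
qed

lemma trigp_mult:
  assumes "trigp f" "trigp g"
  shows "\<exists>h. trigp h \<and> (\<forall>w. cmod w = 1 \<longrightarrow> f w * g w = h w)"
  using assms
proof (induction rule: trigp.induct)
  case (gen a k)
  thus ?case by (rule trigp_mult_gen)
next
  case (add f1 f2)
  then obtain h1 h2 where "trigp h1" "\<forall>w. cmod w = 1 \<longrightarrow> f1 w * g w = h1 w"
    "trigp h2" "\<forall>w. cmod w = 1 \<longrightarrow> f2 w * g w = h2 w" by blast
  thus ?case by (intro exI[of _ "\<lambda>w. h1 w + h2 w"]) (auto intro: trigp.add simp: distrib_right)
qed

lemma trig_approx:
  assumes U: "continuous_on (sphere 0 1) U" and e: "0 < e"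
  shows "\<exists>g. trigp g \<and> (\<forall>w\<in>sphere 0 1. \<bar>U w - g w\<bar> < e)"
proof -
  define P where "P = (\<lambda>h. \<exists>g. trigp g \<and> (\<forall>w\<in>sphere (0::complex) 1. h w = g w))"
  have "\<exists>g. P g \<and> (\<forall>x\<in>sphere 0 1. \<bar>U x - g x\<bar> < e)"
  proof (rule Stone_Weierstrass_HOL[OF compact_sphere _ _ _ _ _ U e])
    show "P (\<lambda>x. c)" for c unfolding P_def using trigp_const by blast
    show "continuous_on (sphere 0 1) f" if "P f" for f
      using that unfolding P_def by (metis continuous_on_cong trigp_cont)
    show "P (\<lambda>x. f x + g x)" if "P f \<and> P g" for f g
      using that unfolding P_def by (metis (mono_tags, lifting) trigp.add)
    show "P (\<lambda>x. f x * g x)" if "P f \<and> P g" for f g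
    proof -
      from that obtain g1 g2 where "trigp g1" "\<forall>w\<in>sphere 0 1. f w = g1 w"
        "trigp g2" "\<forall>w\<in>sphere 0 1. g w = g2 w" unfolding P_def by blast
      moreover obtain h where "trigp h" "\<forall>w. cmod w = 1 \<longrightarrow> g1 w * g2 w = h w"
        using trigp_mult[OF \<open>trigp g1\<close> \<open>trigp g2\<close>] by blast
      ultimately show ?thesis unfolding P_def by (intro exI[of _ h]) auto
    qed
    show "\<exists>f. P f \<and> f x \<noteq> f y" if "x \<in> sphere 0 1 \<and> y \<in> sphere 0 1 \<and> x \<noteq> y" for x y
    proof (cases "Re x = Re y")
      case True
      hence "Im x \<noteq> Im y" using that complex_eq_iff by blast
      moreover have "P (\<lambda>w. Re ((- \<i>) * w ^ 1))" unfolding P_def using trigp.gen by blast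
      ultimately show ?thesis by (intro exI[of _ "\<lambda>w. Re ((- \<i>) * w ^ 1)"]) auto
    next
      case False
      moreover have "P (\<lambda>w. Re (1 * w ^ 1))" unfolding P_def using trigp.gen by blast
      ultimately show ?thesis by (intro exI[of _ "\<lambda>w. Re (1 * w ^ 1)"]) auto
    qed
  qed
  thus ?thesis unfolding P_def by auto
qed

lemma trigp_prim:
  assumes "trigp g"
  shows "\<exists>F c. trigp F \<and> (\<forall>x. ((\<lambda>x. F (W x)) has_real_derivative (g (W x) - c) / (1 + x\<^sup>2)) (at x))"
  using assms
proof (induction rule: trigp.induct)
  case (gen a k)
  show ?case
  proof (cases "k = 0")
    case True
    show ?thesis using True
      by (intro exI[of _ "\<lambda>w. 0"] exI[of _ "Re a"]) (auto intro: trigp_const)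
  next
    case False
    define b where "b = a / (2 * \<i> * of_nat k)"
    have "((\<lambda>x. Re (b * W x ^ k)) has_real_derivative (Re (a * W x ^ k) - 0) / (1 + x\<^sup>2)) (at x)" for x
    proof -
      have d: "((\<lambda>w. b * w ^ k) has_field_derivative b * (of_nat k * W x ^ (k - 1))) (at (W x))"
        by (auto intro!: derivative_eq_intros)
      have "b * (of_nat k * W x ^ (k - 1)) * (2 * \<i> * W x) = a * W x ^ k"
      proof -
        have "W x ^ (k - 1) * W x = W x ^ k" using False by (metis power_minus_mult neq0_conv)
        thus ?thesis using False unfolding b_def by (simp add: field_simps)
      qed
      thus ?thesis using Re_W_deriv[OF d] by simp
    qed
    thus ?thesis by (intro exI[of _ "\<lambda>w. Re (b * w ^ k)"] exI[of _ 0] conjI trigp.gen allI)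
  qed
next
  case (add f g)
  then obtain F1 c1 F2 c2 where "trigp F1" "\<forall>x. ((\<lambda>x. F1 (W x)) has_real_derivative (f (W x) - c1) / (1 + x\<^sup>2)) (at x)"
    "trigp F2" "\<forall>x. ((\<lambda>x. F2 (W x)) has_real_derivative (g (W x) - c2) / (1 + x\<^sup>2)) (at x)" by blast
  thus ?case
    by (intro exI[of _ "\<lambda>w. F1 w + F2 w"] exI[of _ "c1 + c2"])
       (auto intro: trigp.add intro!: derivative_eq_intros simp: add_divide_distrib[symmetric])
qed

lemma core_id: fixes x q c C D :: complex
  assumes C: "C \<noteq> 0" and D: "D \<noteq> 0" and hC: "C = (1 - \<i>*x) - q*(1+\<i>*x)" and hD: "D = (1 + \<i>*x) - c*(1 - \<i>*x)"
  shows "(1+x\<^sup>2)*(1+c)/(2*D) + (1+x\<^sup>2)*(1+q)/(2*C) = (1-\<i>*x)/C + (1+\<i>*x)/D - 1"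
proof -
  have "(1+x\<^sup>2)*(1+c)*C + (1+x\<^sup>2)*(1+q)*D = 2*(1-\<i>*x)*D + 2*(1+\<i>*x)*C - 2*C*D"
    unfolding hC hD by (simp add: algebra_simps power2_eq_square)
  thus ?thesis using C D by (simp add: field_simps) algebra
qed

lemma Im_as: "complex_of_real (Im z) = (z - cnj z) / (2 * \<i>)"
  by (simp add: complex_eq_iff)

lemma Re_as: "complex_of_real (Re z) = (z + cnj z) / 2"
  by (simp add: complex_eq_iff)

definition eta :: "complex \<Rightarrow> complex" where
  "eta q = \<i> * (1 - cnj q) / (1 + cnj q)"

lemma eta_Im: assumes "cmod q < 1" shows "0 < Im (eta q)"
proof -
  obtain a b where q: "q = Complex a b" by (metis complex.collapse)
  have ab: "a\<^sup>2 + b\<^sup>2 < 1" using assms by (simp add: q cmod_def)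
  have "a\<^sup>2 < 1" using ab zero_le_power2[of b] by linarith
  hence "\<bar>a\<bar> < 1" by (simp add: abs_square_less_1)
  hence "0 < (1 + a)\<^sup>2" by simp
  hence pos: "0 < (1 + a)\<^sup>2 + b\<^sup>2" by (simp add: add_pos_nonneg)
  have "Im (eta q) = (1 - a\<^sup>2 - b\<^sup>2) / ((1 + a)\<^sup>2 + b\<^sup>2)"
    by (simp add: q eta_def Im_divide power2_eq_square algebra_simps)
  thus ?thesis using ab pos by simp
qed

lemma eta_id:
  assumes q: "cmod q < 1"
  shows "(1 + x\<^sup>2) * Im (1 / (complex_of_real x - eta q)) = 2 * Re (1 / (1 - q * W x)) - 1"
proof -
  define c where "c = cnj q"
  define C where "C = (1 - \<i> * of_real x) - q * (1 + \<i> * of_real x)"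
  define D where "D = (1 + \<i> * of_real x) - c * (1 - \<i> * of_real x)"
  have DC: "D = cnj C" by (simp add: C_def D_def c_def)
  have CW: "C = (1 - \<i> * of_real x) * (1 - q * W x)"
    using den_ne[of x] by (simp add: C_def W_def field_simps)
  have "cmod (q * W x) < 1" using q by (simp add: norm_mult)
  hence qW: "1 - q * W x \<noteq> 0" by auto
  have C0: "C \<noteq> 0" unfolding CW using den_ne[of x] qW by simp
  have D0: "D \<noteq> 0" using DC C0 by simp
  have "cmod c < 1" using q by (simp add: c_def)
  hence c1: "1 + c \<noteq> 0"
  proof (intro notI)
    assume "cmod c < 1" "1 + c = 0"
    hence "c = -1" by (simp add: add_eq_0_iff)
    thus False using \<open>cmod c < 1\<close> by simp
  qed
  have h: "complex_of_real x - eta q = - \<i> * D / (1 + c)"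
    unfolding eta_def c_def[symmetric] D_def using c1 by (simp add: field_simps)
  have z: "1 / (complex_of_real x - eta q) = \<i> * (1 + c) / D"
    unfolding h using c1 D0 by (simp add: field_simps)
  have cz: "cnj (\<i> * (1 + c) / D) = - \<i> * (1 + q) / C" by (simp add: DC c_def)
  have Imz: "complex_of_real (Im (\<i> * (1 + c) / D)) = (1 + c) / (2 * D) + (1 + q) / (2 * C)"
  proof -
    have "complex_of_real (Im (\<i> * (1 + c) / D)) = ((\<i> * (1 + c) / D) - cnj (\<i> * (1 + c) / D)) / (2 * \<i>)"
      by (rule Im_as)
    also have "\<dots> = (\<i> * ((1 + c) / D) - (- \<i> * ((1 + q) / C))) / (2 * \<i>)"
      unfolding cz by simp
    also have "\<dots> = (1 + c) / (2 * D) + (1 + q) / (2 * C)"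
      using C0 D0 by (simp add: field_simps)
    finally show ?thesis .
  qed
  have w1: "1 / (1 - q * W x) = (1 - \<i> * of_real x) / C"
    unfolding CW using nonzero_divide_mult_cancel_left[OF den_ne[of x], of "1 - q * W x"] by simp
  have w2: "cnj ((1 - \<i> * of_real x) / C) = (1 + \<i> * of_real x) / D" by (simp add: DC)
  have Rew: "complex_of_real (Re (1 / (1 - q * W x))) = ((1 - \<i> * of_real x) / C + (1 + \<i> * of_real x) / D) / 2"
  proof -
    have "complex_of_real (Re (1 / (1 - q * W x))) = (1 / (1 - q * W x) + cnj (1 / (1 - q * W x))) / 2"
      by (rule Re_as)
    thus ?thesis unfolding w1 w2 .
  qed
  have "complex_of_real ((1 + x\<^sup>2) * Im (1 / (complex_of_real x - eta q))) =
        (1 + (of_real x)\<^sup>2) * ((1 + c) / (2 * D) + (1 + q) / (2 * C))"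
    unfolding z of_real_mult Imz by simp
  also have "\<dots> = (1 - \<i> * of_real x) / C + (1 + \<i> * of_real x) / D - 1"
    using core_id[OF C0 D0 C_def D_def] by (simp add: distrib_left)
  also have "\<dots> = complex_of_real (2 * Re (1 / (1 - q * W x)) - 1)"
    unfolding of_real_diff of_real_mult Rew by (simp add: mult_ac)
  finally show ?thesis by (simp only: of_real_eq_iff)
qed


definition om :: "nat \<Rightarrow> complex" where "om p = exp (2 * pi * \<i> / of_nat p)"

lemma om_pow: "om p ^ n = exp (2 * pi * \<i> * of_nat n / of_nat p)"
  unfolding om_def exp_of_nat_mult[symmetric] by (simp add: field_simps)

lemma norm_om [simp]: "cmod (om p) = 1"
  unfolding om_def by (simp add: norm_exp_eq_Re)

lemma om_pow_eq1: assumes "0 < p" shows "om p ^ s = 1 \<longleftrightarrow> p dvd s"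
proof -
  have "om p ^ s = 1 \<longleftrightarrow> (\<exists>n::int. 2 * pi * real s / real p = of_int (2 * n) * pi)"
    unfolding om_pow exp_eq_1 by simp
  also have "\<dots> \<longleftrightarrow> (\<exists>n::int. real s = real p * of_int n)"
    using assms pi_gt_zero by (auto simp: field_simps)
  also have "\<dots> \<longleftrightarrow> p dvd s"
  proof
    assume "\<exists>n::int. real s = real p * of_int n"
    then obtain n :: int where "real s = real p * of_int n" by blast
    hence "int s = int p * n" by (metis of_int_eq_iff of_int_mult of_int_of_nat_eq)
    hence "int p dvd int s" by simp
    thus "p dvd s" by simp
  next
    assume "p dvd s" then obtain k where "s = p * k" by blast
    thus "\<exists>n::int. real s = real p * of_int n" by (intro exI[of _ "int k"]) simp
  qed
  finally show ?thesis .
qed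

lemma om_pow_p: "0 < p \<Longrightarrow> om p ^ p = 1"
  using om_pow_eq1 by simp

lemma root_sum: assumes "0 < p"
  shows "(\<Sum>j<p. (om p ^ s) ^ j) = (if p dvd s then of_nat p else 0)"
proof (cases "p dvd s")
  case True
  hence "om p ^ s = 1" using om_pow_eq1[OF assms] by simp
  thus ?thesis using True by simp
next
  case False
  hence ne: "om p ^ s \<noteq> 1" using om_pow_eq1[OF assms] by simp
  have "(om p ^ s) ^ p = 1" by (metis om_pow_p[OF assms] power_mult mult.commute one_power2 power_one)
  thus ?thesis using False ne by (simp add: sum_gp_strict)
qed

lemma inv_geom:
  fixes q :: complex assumes "cmod q < 1" "0 < p"
  shows "1 / (1 - q) = (\<Sum>n<p. q ^ n) / (1 - q ^ p)"
proof -
  have q1: "q \<noteq> 1" using assms by auto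
  have "cmod (q ^ p) < 1" using assms by (simp add: norm_power power_less_one_iff) 
  hence "q ^ p \<noteq> 1" by auto
  hence qp0: "1 - q ^ p \<noteq> 0" by simp
  have "(\<Sum>n<p. q ^ n) = (1 - q ^ p) * (1 / (1 - q))" using q1 by (simp add: sum_gp_strict)
  thus ?thesis using nonzero_mult_div_cancel_left[OF qp0, of "1/(1-q)"] by simp
qed

lemma main_sum:
  assumes p: "0 < p" and r: "r < p" and t: "0 \<le> t" "t < 1" and w: "cmod w = 1"
  shows "(\<Sum>j<p. om p ^ (j * r) / (1 - complex_of_real t * om p ^ j * w)) =
         of_nat p * (of_real t * w) ^ ((p - r) mod p) / (1 - (of_real t * w) ^ p)"
proof -
  define z where "z = complex_of_real t * w"
  have nz: "cmod z < 1" using t w by (simp add: z_def norm_mult)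
  have qn: "cmod (complex_of_real t * om p ^ j * w) < 1" for j
    using t w by (simp add: norm_mult norm_power)
  have qp: "(complex_of_real t * om p ^ j * w) ^ p = z ^ p" for j
  proof -
    have "(om p ^ j) ^ p = 1" by (metis om_pow_p[OF p] power_mult mult.commute power_one)
    thus ?thesis by (simp add: z_def power_mult_distrib)
  qed
  have "(\<Sum>j<p. om p ^ (j * r) / (1 - complex_of_real t * om p ^ j * w)) =
        (\<Sum>j<p. om p ^ (j * r) * (\<Sum>n<p. (complex_of_real t * om p ^ j * w) ^ n) / (1 - z ^ p))"
  proof (rule sum.cong[OF refl])
    fix j
    have "om p ^ (j * r) / (1 - complex_of_real t * om p ^ j * w) = om p ^ (j * r) * (1 / (1 - complex_of_real t * om p ^ j * w))"
      by simp
    also have "\<dots> = om p ^ (j * r) * ((\<Sum>n<p. (complex_of_real t * om p ^ j * w) ^ n) / (1 - z ^ p))"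
      by (simp only: inv_geom[OF qn p] qp)
    finally show "om p ^ (j * r) / (1 - complex_of_real t * om p ^ j * w) = om p ^ (j * r) * (\<Sum>n<p. (complex_of_real t * om p ^ j * w) ^ n) / (1 - z ^ p)"
      by simp
  qed
  also have "\<dots> = (\<Sum>j<p. om p ^ (j * r) * (\<Sum>n<p. (complex_of_real t * om p ^ j * w) ^ n)) / (1 - z ^ p)"
    by (simp add: sum_divide_distrib)
  also have "\<dots> = (\<Sum>j<p. \<Sum>n<p. z ^ n * (om p ^ (r + n)) ^ j) / (1 - z ^ p)"
  proof -
    have pt: "om p ^ (j*r) * (complex_of_real t * om p ^ j * w) ^ n = z ^ n * (om p ^ (r + n)) ^ j" for j n
    proof -
      have "(om p ^ (r + n)) ^ j = om p ^ (j * r) * (om p ^ j) ^ n"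
        by (simp only: power_mult[symmetric] power_add[symmetric]) (simp add: algebra_simps)
      thus ?thesis by (simp add: z_def power_mult_distrib mult_ac)
    qed
    show ?thesis unfolding sum_distrib_left pt ..
  qed
  also have "\<dots> = (\<Sum>n<p. z ^ n * (\<Sum>j<p. (om p ^ (r + n)) ^ j)) / (1 - z ^ p)"
    by (subst sum.swap) (simp add: sum_distrib_left)
  also have "\<dots> = (\<Sum>n<p. if n = (p - r) mod p then z ^ n * of_nat p else 0) / (1 - z ^ p)"
  proof -
    have "p dvd (r + n) \<longleftrightarrow> n = (p - r) mod p" if "n < p" for n
    proof
      assume "p dvd (r + n)"
      moreover have "r + n < 2 * p" using that r by simp
      ultimately have "r + n = 0 \<or> r + n = p"
      proof -
        assume "p dvd (r + n)" "r + n < 2 * p"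
        then obtain k where k: "r + n = p * k" by blast
        hence "p * k < p * 2" using \<open>r + n < 2 * p\<close> by (simp add: mult.commute)
        hence "k < 2" by simp
        hence "k = 0 \<or> k = 1" by auto
        thus ?thesis using k by auto
      qed
      thus "n = (p - r) mod p" using r that by auto
    next
      assume "n = (p - r) mod p"
      thus "p dvd (r + n)" using r
        by (cases "r = 0") auto
    qed
    thus ?thesis using root_sum[OF p] by (intro arg_cong2[where f="(/)"] sum.cong) auto
  qed
  also have "\<dots> = of_nat p * z ^ ((p - r) mod p) / (1 - z ^ p)"
    using p by (simp add: sum.delta' mult.commute)
  finally show ?thesis by (simp add: z_def)
qed

definition small :: "real \<Rightarrow> (real \<Rightarrow> real) \<Rightarrow> bool" where
  "small \<delta> \<phi> \<longleftrightarrow> (\<exists>\<phi>'. (\<forall>x. (\<phi> has_real_derivative \<phi>' x) (at x)) \<and>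
      (\<forall>x. \<bar>\<phi> x\<bar> \<le> \<delta> \<and> (1 + x\<^sup>2) * \<bar>\<phi>' x\<bar> \<le> \<delta>))"

lemma small_add: assumes "small d1 f" "small d2 g" shows "small (d1 + d2) (\<lambda>x. f x + g x)"
proof -
  obtain f' where f: "\<And>x. (f has_real_derivative f' x) (at x)" "\<And>x. \<bar>f x\<bar> \<le> d1" "\<And>x. (1 + x\<^sup>2) * \<bar>f' x\<bar> \<le> d1"
    using assms(1) unfolding small_def by blast
  obtain g' where g: "\<And>x. (g has_real_derivative g' x) (at x)" "\<And>x. \<bar>g x\<bar> \<le> d2" "\<And>x. (1 + x\<^sup>2) * \<bar>g' x\<bar> \<le> d2"
    using assms(2) unfolding small_def by blast
  show ?thesis unfolding small_def
  proof (intro exI[of _ "\<lambda>x. f' x + g' x"] conjI allI)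
    fix x
    show "((\<lambda>x. f x + g x) has_real_derivative f' x + g' x) (at x)" by (rule DERIV_add[OF f(1) g(1)])
    show "\<bar>f x + g x\<bar> \<le> d1 + d2" using f(2)[of x] g(2)[of x] abs_triangle_ineq[of "f x" "g x"] by linarith
    have "(1 + x\<^sup>2) * \<bar>f' x + g' x\<bar> \<le> (1 + x\<^sup>2) * (\<bar>f' x\<bar> + \<bar>g' x\<bar>)"
      using onepx[of x] abs_triangle_ineq[of "f' x" "g' x"] by (intro mult_left_mono) auto
    thus "(1 + x\<^sup>2) * \<bar>f' x + g' x\<bar> \<le> d1 + d2" using f(3)[of x] g(3)[of x] by (simp add: distrib_left)
  qed
qed

lemma small_mono: "small d f \<Longrightarrow> d \<le> d' \<Longrightarrow> small d' f"
  unfolding small_def by (meson order_trans)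

lemma small_zero: "0 \<le> d \<Longrightarrow> small d (\<lambda>x. 0)"
  unfolding small_def by (intro exI[of _ "\<lambda>x. 0"]) auto

lemma small_cong: "small d f \<Longrightarrow> (\<And>x. g x = f x) \<Longrightarrow> small d g"
  by (metis ext)

definition Acl :: "(real \<times> complex) list \<Rightarrow> real \<Rightarrow> real" where
  "Acl L x = (\<Sum>p\<leftarrow>L. fst p * Im (1 / (complex_of_real x - snd p)))"

definition valid :: "(real \<times> complex) list \<Rightarrow> bool" where
  "valid L \<longleftrightarrow> (\<forall>p\<in>set L. 0 < Im (snd p))"

definition ApproxT :: "(complex \<Rightarrow> real) \<Rightarrow> bool" where
  "ApproxT F \<longleftrightarrow> (\<forall>\<delta>>0. \<exists>L. valid L \<and> small \<delta> (\<lambda>x. F (W x) - (1 + x\<^sup>2) * Acl L x))"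

lemma Acl_append: "Acl (L1 @ L2) x = Acl L1 x + Acl L2 x"
  by (simp add: Acl_def)

lemma ApproxT_add: assumes "ApproxT F" "ApproxT G" shows "ApproxT (\<lambda>w. F w + G w)"
  unfolding ApproxT_def
proof (intro allI impI)
  fix \<delta> :: real assume d: "0 < \<delta>"
  obtain L1 where L1: "valid L1" "small (\<delta>/2) (\<lambda>x. F (W x) - (1 + x\<^sup>2) * Acl L1 x)"
    using assms(1) d unfolding ApproxT_def by (meson half_gt_zero)
  obtain L2 where L2: "valid L2" "small (\<delta>/2) (\<lambda>x. G (W x) - (1 + x\<^sup>2) * Acl L2 x)"
    using assms(2) d unfolding ApproxT_def by (meson half_gt_zero)
  have "small (\<delta>/2 + \<delta>/2) (\<lambda>x. F (W x) + G (W x) - (1 + x\<^sup>2) * Acl (L1 @ L2) x)"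
    by (rule small_cong[OF small_add[OF L1(2) L2(2)]]) (simp add: Acl_append algebra_simps)
  moreover have "valid (L1 @ L2)" using L1 L2 by (auto simp: valid_def)
  ultimately show "\<exists>L. valid L \<and> small \<delta> (\<lambda>x. F (W x) + G (W x) - (1 + x\<^sup>2) * Acl L x)" by auto
qed

lemma den_bound: assumes "0 \<le> s" "s \<le> 1/2" "cmod w = 1"
  shows "1/2 \<le> cmod (1 - complex_of_real s * w ^ p)"
proof -
  have "cmod (complex_of_real s * w ^ p) = s" using assms by (simp add: norm_mult norm_power)
  moreover have "1 \<le> cmod (1 - complex_of_real s * w ^ p) + cmod (complex_of_real s * w ^ p)"
    using norm_triangle_ineq[of "1 - complex_of_real s * w ^ p" "complex_of_real s * w ^ p"] by simp
  ultimately show ?thesis using assms by linarith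
qed

lemma err_small:
  assumes s: "0 \<le> s" "s \<le> 1/2"
  shows "small (8 * cmod b * (2 * k + p + 1)) (\<lambda>x. Re (b * W x ^ k / (1 - complex_of_real s * W x ^ p)))"
proof -
  define g where "g = (\<lambda>w::complex. 1 - complex_of_real s * w ^ p)"
  define D where "D = (\<lambda>w::complex. (b * (of_nat k * w ^ (k - Suc 0)) * g w - b * w ^ k * (0 - complex_of_real s * (of_nat p * w ^ (p - Suc 0)))) / (g w * g w))"
  have gb: "1/2 \<le> cmod (g (W x))" for x unfolding g_def by (rule den_bound[OF s norm_W])
  have g0: "g (W x) \<noteq> 0" for x using gb[of x] by auto
  have der: "((\<lambda>w. b * w ^ k / g w) has_field_derivative D (W x)) (at (W x))" for x
  proof -
    have "((\<lambda>w. b * w ^ k / (1 - complex_of_real s * w ^ p)) has_field_derivative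
       (b * (of_nat k * (1 * W x ^ (k - Suc 0))) * (1 - complex_of_real s * W x ^ p) - b * W x ^ k * (0 - complex_of_real s * (of_nat p * (1 * W x ^ (p - Suc 0))))) /
       ((1 - complex_of_real s * W x ^ p) * (1 - complex_of_real s * W x ^ p))) (at (W x))"
      by (rule DERIV_divide[OF DERIV_cmult[OF DERIV_power[OF DERIV_ident]] DERIV_diff[OF DERIV_const DERIV_cmult[OF DERIV_power[OF DERIV_ident]]] g0[unfolded g_def]])
    thus ?thesis by (simp add: D_def g_def)
  qed
  have n1: "cmod (W x ^ n) = 1" for x n by (simp add: norm_power)
  have gn: "cmod (g (W x)) \<le> 1 + s" for x
  proof -
    have "cmod (g (W x)) \<le> cmod (1::complex) + cmod (complex_of_real s * W x ^ p)"
      unfolding g_def by (rule norm_triangle_ineq4)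
    also have "\<dots> = 1 + s" using s by (simp add: norm_mult n1)
    finally show ?thesis .
  qed
  have Db: "cmod (D (W x)) \<le> 4 * (cmod b * (2 * k + p))" for x
  proof -
    define N where "N = b * (of_nat k * W x ^ (k - Suc 0)) * g (W x) - b * W x ^ k * (0 - complex_of_real s * (of_nat p * W x ^ (p - Suc 0)))"
    have "cmod (b * (of_nat k * W x ^ (k - Suc 0)) * g (W x)) = cmod b * k * cmod (g (W x))"
      by (simp add: norm_mult n1)
    also have "\<dots> \<le> cmod b * k * (1 + s)" by (intro mult_left_mono gn) simp
    finally have T1: "cmod (b * (of_nat k * W x ^ (k - Suc 0)) * g (W x)) \<le> cmod b * k * (1 + s)" .
    have T2: "cmod (b * W x ^ k * (0 - complex_of_real s * (of_nat p * W x ^ (p - Suc 0)))) = cmod b * s * p"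
      using s by (simp add: norm_mult n1)
    have "cmod N \<le> cmod (b * (of_nat k * W x ^ (k - Suc 0)) * g (W x)) + cmod (b * W x ^ k * (0 - complex_of_real s * (of_nat p * W x ^ (p - Suc 0))))"
      unfolding N_def by (rule norm_triangle_ineq4)
    also have "\<dots> \<le> cmod b * k * (1 + s) + cmod b * s * p" using T1 T2 by linarith
    also have "\<dots> = cmod b * (k + k * s + s * p)" by (simp add: algebra_simps)
    also have "\<dots> \<le> cmod b * (2 * k + p)"
    proof (rule mult_left_mono)
      have "real k * s \<le> real k" using s by (intro mult_left_le) auto
      moreover have "s * real p \<le> real p" using s by (intro mult_left_le_one_le) auto
      ultimately show "real k + real k * s + s * real p \<le> real (2 * k + p)" by simp
    qed simp
    finally have num: "cmod N \<le> cmod b * (2 * k + p)" .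
    have den: "1/2 * (1/2) \<le> cmod (g (W x)) * cmod (g (W x))"
      using gb[of x] by (intro mult_mono) auto
    have "cmod (D (W x)) = cmod N / (cmod (g (W x)) * cmod (g (W x)))"
      by (simp add: D_def N_def norm_divide norm_mult)
    also have "\<dots> \<le> (cmod b * (2 * k + p)) / (1/2 * (1/2))"
      by (rule frac_le[OF _ num _ den]) auto
    also have "\<dots> = 4 * (cmod b * (2 * k + p))" by simp
    finally show ?thesis .
  qed
  have d1: "((\<lambda>x. Re (b * W x ^ k / (1 - complex_of_real s * W x ^ p))) has_real_derivative Re (D (W x) * (2 * \<i> * W x)) / (1 + x\<^sup>2)) (at x)"
      for x using Re_W_deriv[OF der[of x]] unfolding g_def .
  have b1: "\<bar>Re (b * W x ^ k / (1 - complex_of_real s * W x ^ p))\<bar> \<le> 8 * cmod b * (2 * real k + real p + 1)" for x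
  proof -
    have "\<bar>Re (b * W x ^ k / (1 - complex_of_real s * W x ^ p))\<bar> \<le> cmod (b * W x ^ k / g (W x))"
      unfolding g_def by (rule abs_Re_le_cmod)
    also have "\<dots> = cmod b / cmod (g (W x))" by (simp add: norm_divide norm_mult n1)
    also have "\<dots> \<le> cmod b / (1/2)" by (rule frac_le[OF _ _ _ gb]) auto
    also have "\<dots> = cmod b * 2" by simp
    also have "\<dots> \<le> cmod b * (8 * (2 * k + p + 1))" by (rule mult_left_mono) auto
    also have "\<dots> = 8 * cmod b * (2 * real k + real p + 1)" by simp
    finally show ?thesis .
  qed
  have b2: "(1 + x\<^sup>2) * \<bar>Re (D (W x) * (2 * \<i> * W x)) / (1 + x\<^sup>2)\<bar> \<le> 8 * cmod b * (2 * real k + real p + 1)" for x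
  proof -
    have "(1 + x\<^sup>2) * \<bar>Re (D (W x) * (2 * \<i> * W x)) / (1 + x\<^sup>2)\<bar> = \<bar>Re (D (W x) * (2 * \<i> * W x))\<bar>"
      using onepx[of x] by simp
    also have "\<dots> \<le> cmod (D (W x) * (2 * \<i> * W x))" by (rule abs_Re_le_cmod)
    also have "\<dots> = 2 * cmod (D (W x))" by (simp add: norm_mult)
    also have "\<dots> \<le> 2 * (4 * (cmod b * (2 * k + p)))" using Db[of x] by simp
    also have "\<dots> = 8 * (cmod b * (2 * k + p))" by simp
    also have "\<dots> \<le> 8 * (cmod b * (2 * k + p + 1))" by (intro mult_left_mono) auto
    also have "\<dots> = 8 * cmod b * (2 * real k + real p + 1)" by simp
    finally show ?thesis .
  qed
  show ?thesis unfolding small_def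
    by (intro exI[of _ "\<lambda>x. Re (D (W x) * (2 * \<i> * W x)) / (1 + x\<^sup>2)"] conjI allI d1 b1 b2)
qed

lemma cnj_om_pow: assumes p: "0 < p" and m: "m \<le> p"
  shows "cnj (om p ^ (j * (p - m))) = om p ^ (j * m)"
proof -
  define z where "z = om p ^ (j * (p - m))"
  define y where "y = om p ^ (j * m)"
  have e: "j * (p - m) + j * m = p * j" using m by (simp add: diff_mult_distrib2 mult.commute)
  have "z * y = om p ^ (p * j)" unfolding z_def y_def by (simp add: power_add[symmetric] e)
  also have "\<dots> = (om p ^ p) ^ j" by (simp add: power_mult)
  also have "\<dots> = 1" by (simp add: om_pow_p[OF p])
  finally have zy: "z * y = 1" .
  have "cmod z = 1" by (simp add: z_def norm_power)
  hence zc: "z * cnj z = 1" by (rule cnj_unit)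
  have "cnj z = cnj z * (z * y)" using zy by simp
  also have "\<dots> = (z * cnj z) * y" by (simp add: mult_ac)
  also have "\<dots> = y" using zc by simp
  finally show ?thesis by (simp add: z_def y_def)
qed

lemma sum_aux: "(\<Sum>j<p. (c j::real) * (2 * r j - 1)) = 2 * (\<Sum>j<p. c j * r j) - (\<Sum>j<p. c j)"
  by (simp add: sum_subtractf sum_distrib_left algebra_simps)

lemma poisson_comb:
  assumes m: "0 < m" and p: "p = 2 * m + 1" and t: "0 < t" "t < 1" and w: "cmod w = 1"
  shows "(\<Sum>j<p. Re (a / (of_nat p * complex_of_real t ^ m) * om p ^ (j * (p - m))) *
            (2 * Re (1 / (1 - complex_of_real t * om p ^ j * w)) - 1))
     = Re (a * w ^ m / (1 - (complex_of_real t * w) ^ p)) +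
       Re (cnj a * complex_of_real t * w ^ (m + 1) / (1 - (complex_of_real t * w) ^ p))"
proof -
  define \<mu> where "\<mu> = a / (of_nat p * complex_of_real t ^ m)"
  define X where "X = (\<lambda>j. 1 / (1 - complex_of_real t * om p ^ j * w))"
  define S where "S = (\<lambda>r. \<Sum>j<p. om p ^ (j * r) / (1 - complex_of_real t * om p ^ j * w))"
  have p0: "0 < p" and mp: "m < p" and pm: "p - m = m + 1" using p m by auto
  have S1: "S (p - m) = of_nat p * (complex_of_real t * w) ^ m / (1 - (complex_of_real t * w) ^ p)"
    unfolding S_def using main_sum[OF p0 _ _ _ w, of "p - m" t] mp t m by simp
  have S2: "S m = of_nat p * (complex_of_real t * w) ^ (m + 1) / (1 - (complex_of_real t * w) ^ p)"
  proof -
    have pm2: "(p - m) mod p = m + 1" using p m by simp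
    show ?thesis unfolding S_def using main_sum[OF p0 mp _ _ w, of t] t pm2 by simp
  qed
  have sc: "(\<Sum>j<p. Re (\<mu> * om p ^ (j * (p - m)))) = 0"
  proof -
    have "(\<Sum>j<p. Re (\<mu> * om p ^ (j * (p - m)))) = Re (\<mu> * (\<Sum>j<p. (om p ^ (p - m)) ^ j))"
      by (simp add: sum_distrib_left power_mult[symmetric] mult.commute)
    also have "(\<Sum>j<p. (om p ^ (p - m)) ^ j) = 0"
    proof -
      have "\<not> p dvd (p - m)"
      proof
        assume "p dvd (p - m)"
        moreover have "0 < p - m" using mp by simp
        ultimately have "p \<le> p - m" by (rule dvd_imp_le)
        thus False using m mp by simp
      qed
      thus ?thesis using root_sum[OF p0, of "p - m"] by simp
    qed
    finally show ?thesis by simp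
  qed
  have pt: "Re (\<mu> * om p ^ (j * (p - m))) * Re (X j) =
      Re (\<mu> * (om p ^ (j * (p - m)) / (1 - complex_of_real t * om p ^ j * w)) +
          cnj \<mu> * (om p ^ (j * m) / (1 - complex_of_real t * om p ^ j * w))) / 2" for j
  proof -
    define u where "u = \<mu> * om p ^ (j * (p - m))"
    have cu: "cnj u = cnj \<mu> * om p ^ (j * m)" unfolding u_def using cnj_om_pow[OF p0, of m j] mp by simp
    have "Re u * Re (X j) = Re (complex_of_real (Re u) * X j)" by simp
    also have "complex_of_real (Re u) * X j = (u * X j + cnj u * X j) / 2" by (simp add: Re_as field_simps)
    also have "\<dots> = (\<mu> * om p ^ (j * (p - m)) * X j + cnj \<mu> * om p ^ (j * m) * X j) / 2"
      unfolding cu by (simp add: u_def)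
    also have "\<dots> = (\<mu> * (om p ^ (j * (p - m)) / (1 - complex_of_real t * om p ^ j * w)) +
          cnj \<mu> * (om p ^ (j * m) / (1 - complex_of_real t * om p ^ j * w))) / 2"
      by (simp add: X_def)
    finally show ?thesis unfolding u_def by (simp add: Re_divide_numeral)
  qed
  have sx: "(\<Sum>j<p. Re (\<mu> * om p ^ (j * (p - m))) * Re (X j)) = Re (\<mu> * S (p - m) + cnj \<mu> * S m) / 2"
    unfolding pt S_def by (simp add: sum_divide_distrib[symmetric] sum.distrib sum_distrib_left)
  have "(\<Sum>j<p. Re (\<mu> * om p ^ (j * (p - m))) * (2 * Re (X j) - 1)) =
        2 * (\<Sum>j<p. Re (\<mu> * om p ^ (j * (p - m))) * Re (X j)) - (\<Sum>j<p. Re (\<mu> * om p ^ (j * (p - m))))"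
    by (rule sum_aux)
  also have "\<dots> = Re (\<mu> * S (p - m)) + Re (cnj \<mu> * S m)" unfolding sx sc by simp
  also have "\<mu> * S (p - m) = a * w ^ m / (1 - (complex_of_real t * w) ^ p)"
    unfolding S1 \<mu>_def using t p0 by (simp add: power_mult_distrib field_simps)
  also have "cnj \<mu> * S m = cnj a * complex_of_real t * w ^ (m + 1) / (1 - (complex_of_real t * w) ^ p)"
    unfolding S2 \<mu>_def using t p0 by (simp add: power_mult_distrib field_simps)
  finally show ?thesis unfolding \<mu>_def X_def .
qed


lemma Acl_map: "Acl (map (\<lambda>j. (c j, e j)) [0..<p]) x = (\<Sum>j<p. c j * Im (1 / (complex_of_real x - e j)))"
  by (simp add: Acl_def o_def sum_set_upt_conv_sum_list_nat[symmetric] atLeast0LessThan)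

lemma gen_ApproxT: "ApproxT (\<lambda>w. Re (a * w ^ k))"
  unfolding ApproxT_def
proof (intro allI impI)
  fix \<delta> :: real assume d: "0 < \<delta>"
  show "\<exists>L. valid L \<and> small \<delta> (\<lambda>x. Re (a * W x ^ k) - (1 + x\<^sup>2) * Acl L x)"
  proof (cases "k = 0")
    case True
    define L where "L = [(Re a, eta 0)]"
    have "valid L" using eta_Im[of 0] by (simp add: L_def valid_def)
    moreover have "Re (a * W x ^ k) - (1 + x\<^sup>2) * Acl L x = 0" for x
    proof -
      have "(1 + x\<^sup>2) * Acl L x = Re a * ((1 + x\<^sup>2) * Im (1 / (complex_of_real x - eta 0)))"
        by (simp add: L_def Acl_def)
      also have "\<dots> = Re a" using eta_id[of 0 x] by simp
      finally show ?thesis using True by simp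
    qed
    ultimately show ?thesis using small_zero[of \<delta>] d
      by (intro exI[of _ L] conjI) (auto intro: small_cong)
  next
    case False
    define m where "m = k"
    have m: "0 < m" using False by (simp add: m_def)
    define p where "p = 2 * m + 1"
    define Q where "Q = 160 * (cmod a + 1) * (real m + 1)"
    have Q0: "0 < Q" unfolding Q_def by (intro mult_pos_pos) (auto simp: add_nonneg_pos)
    define t where "t = min (1/2) (\<delta> / Q)"
    have t0: "0 < t" using d Q0 by (simp add: t_def)
    have t1: "t \<le> 1/2" unfolding t_def by (rule min.cobounded1)
    have tQ: "Q * t \<le> \<delta>"
    proof -
      have "t \<le> \<delta> / Q" by (simp add: t_def)
      thus ?thesis using Q0 by (simp add: field_simps)
    qed
    define c where "c = (\<lambda>j. Re (a / (of_nat p * complex_of_real t ^ m) * om p ^ (j * (p - m))))"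
    define L where "L = map (\<lambda>j. (c j, eta (complex_of_real t * om p ^ j))) [0..<p]"
    have qn: "cmod (complex_of_real t * om p ^ j) < 1" for j using t0 t1 by (simp add: norm_mult norm_power)
    have valid: "valid L" using eta_Im[OF qn] by (auto simp: L_def valid_def)
    define s where "s = t ^ p"
    have s0: "0 \<le> s" using t0 by (simp add: s_def)
    have st: "s \<le> t"
    proof -
      have "t ^ p = t * t ^ (2 * m)" by (simp add: p_def)
      also have "\<dots> \<le> t * 1" using t0 t1 by (intro mult_left_mono power_le_one) auto
      finally show ?thesis by (simp add: s_def)
    qed
    have s1: "s \<le> 1/2" using st t1 by simp
    have AclL: "(1 + x\<^sup>2) * Acl L x = Re (a * W x ^ m / (1 - (complex_of_real t * W x) ^ p)) +
         Re (cnj a * complex_of_real t * W x ^ (m + 1) / (1 - (complex_of_real t * W x) ^ p))" for x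
    proof -
      have "(1 + x\<^sup>2) * Acl L x = (\<Sum>j<p. c j * ((1 + x\<^sup>2) * Im (1 / (complex_of_real x - eta (complex_of_real t * om p ^ j)))))"
        by (simp add: L_def Acl_map sum_distrib_left mult_ac)
      also have "\<dots> = (\<Sum>j<p. c j * (2 * Re (1 / (1 - complex_of_real t * om p ^ j * W x)) - 1))"
        using eta_id[OF qn] by simp
      also have "\<dots> = Re (a * W x ^ m / (1 - (complex_of_real t * W x) ^ p)) +
         Re (cnj a * complex_of_real t * W x ^ (m + 1) / (1 - (complex_of_real t * W x) ^ p))"
        unfolding c_def by (rule poisson_comb[OF m p_def t0 _ norm_W]) (use t1 in simp)
      finally show ?thesis .
    qed
    define E1 where "E1 = (\<lambda>x. Re ((- (a * complex_of_real s)) * W x ^ (m + p) / (1 - complex_of_real s * W x ^ p)))"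
    define E2 where "E2 = (\<lambda>x. Re ((- (cnj a * complex_of_real t)) * W x ^ (m + 1) / (1 - complex_of_real s * W x ^ p)))"
    have phi: "Re (a * W x ^ k) - (1 + x\<^sup>2) * Acl L x = E1 x + E2 x" for x
    proof -
      have den: "1 - complex_of_real s * W x ^ p \<noteq> 0" using den_bound[OF s0 s1, of "W x" p] by auto
      have tw: "(complex_of_real t * W x) ^ p = complex_of_real s * W x ^ p" by (simp add: s_def power_mult_distrib)
      have e1: "a * W x ^ m - a * W x ^ m / (1 - complex_of_real s * W x ^ p) = (- (a * complex_of_real s)) * W x ^ (m + p) / (1 - complex_of_real s * W x ^ p)"
        using den by (simp add: field_simps power_add)
      have "Re (a * W x ^ k) - (1 + x\<^sup>2) * Acl L x =
          Re (a * W x ^ m - a * W x ^ m / (1 - complex_of_real s * W x ^ p)) - Re (cnj a * complex_of_real t * W x ^ (m + 1) / (1 - complex_of_real s * W x ^ p))"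
        unfolding AclL tw m_def by simp
      also have "\<dots> = E1 x + E2 x" unfolding e1 E1_def E2_def by simp
      finally show ?thesis .
    qed
    have sm: "small (8 * cmod (- (a * complex_of_real s)) * (2 * real (m + p) + real p + 1) +
                     8 * cmod (- (cnj a * complex_of_real t)) * (2 * real (m + 1) + real p + 1)) (\<lambda>x. E1 x + E2 x)"
      unfolding E1_def E2_def by (rule small_add[OF err_small[OF s0 s1] err_small[OF s0 s1]])
    have bound: "8 * cmod (- (a * complex_of_real s)) * (2 * real (m + p) + real p + 1) +
                     8 * cmod (- (cnj a * complex_of_real t)) * (2 * real (m + 1) + real p + 1) \<le> \<delta>"
    proof -
      define A where "A = cmod a"
      have A0: "0 \<le> A" by (simp add: A_def)
      have "cmod (- (a * complex_of_real s)) = A * s" using s0 by (simp add: A_def norm_mult)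
      moreover have "cmod (- (cnj a * complex_of_real t)) = A * t" using t0 by (simp add: A_def norm_mult)
      moreover have "A * s \<le> A * t" using st A0 by (rule mult_left_mono)
      ultimately have "8 * cmod (- (a * complex_of_real s)) * (2 * real (m + p) + real p + 1) +
                     8 * cmod (- (cnj a * complex_of_real t)) * (2 * real (m + 1) + real p + 1)
            \<le> 8 * (A * t) * (2 * real (m + p) + real p + 1) + 8 * (A * t) * (2 * real (m + 1) + real p + 1)"
        by (intro add_mono mult_right_mono) auto
      also have "\<dots> = (A * t) * (96 * real m + 64)" by (simp add: p_def algebra_simps)
      also have "\<dots> \<le> ((A + 1) * t) * (160 * (real m + 1))"
        using A0 t0 by (intro mult_mono) auto
      also have "\<dots> = Q * t" by (simp add: Q_def A_def algebra_simps)
      finally show ?thesis using tQ by linarith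
    qed
    show ?thesis
      by (intro exI[of _ L] conjI valid small_cong[OF small_mono[OF sm bound]] phi)
  qed
qed

lemma trigp_ApproxT: "trigp F \<Longrightarrow> ApproxT F"
proof (induction rule: trigp.induct)
  case (gen a k) show ?case by (rule gen_ApproxT)
next
  case (add f g) from add.IH show ?case by (rule ApproxT_add)
qed

lemma arctan_lower:
  fixes \<psi> \<psi>' :: "real \<Rightarrow> real"
  assumes d: "\<And>x. (\<psi> has_real_derivative \<psi>' x) (at x)" and b: "\<And>x. m \<le> (1 + x\<^sup>2) * \<psi>' x" and xy: "x \<le> y"
  shows "m * (arctan y - arctan x) \<le> \<psi> y - \<psi> x"
proof -
  have "(\<lambda>t. \<psi> t - m * arctan t) x \<le> (\<lambda>t. \<psi> t - m * arctan t) y"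
  proof (rule DERIV_nonneg_imp_nondecreasing[OF xy])
    fix u
    have "((\<lambda>t. \<psi> t - m * arctan t) has_real_derivative \<psi>' u - m * inverse (1 + u\<^sup>2)) (at u)"
      by (rule DERIV_diff[OF d DERIV_cmult[OF DERIV_arctan]])
    moreover have "0 \<le> \<psi>' u - m * inverse (1 + u\<^sup>2)"
      using b[of u] onepx[of u] by (simp add: field_simps)
    ultimately show "\<exists>z. ((\<lambda>t. \<psi> t - m * arctan t) has_real_derivative z) (at u) \<and> 0 \<le> z" by blast
  qed
  thus ?thesis by (simp add: algebra_simps)
qed

lemma no_pos_deriv:
  fixes \<psi> \<psi>' :: "real \<Rightarrow> real"
  assumes d: "\<And>x. (\<psi> has_real_derivative \<psi>' x) (at x)" and b: "\<And>x. m \<le> (1 + x\<^sup>2) * \<psi>' x"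
    and m: "0 < m" and l: "((\<lambda>y. \<psi> y - \<psi> (-y)) \<longlongrightarrow> 0) at_top"
  shows False
proof -
  have "eventually (\<lambda>y. m * (pi/2) \<le> \<psi> y - \<psi> (-y)) at_top"
    using eventually_ge_at_top[of 1]
  proof eventually_elim
    case (elim y)
    have 1: "m * (arctan y - arctan (-y)) \<le> \<psi> y - \<psi> (-y)" using elim by (intro arctan_lower[OF d b]) simp
    have "arctan 1 \<le> arctan y" by (subst arctan_le_iff) (rule elim)
    hence "pi/4 \<le> arctan y" by (simp only: arctan_one)
    hence "m * (pi/2) \<le> m * (arctan y - arctan (-y))" using m by (simp add: arctan_minus)
    thus ?case using 1 by linarith
  qed
  hence "m * (pi/2) \<le> 0" by (intro tendsto_lowerbound[OF l]) auto
  thus False using m pi_gt_zero by (simp add: mult_pos_pos) (smt (verit) mult_pos_pos pi_gt_zero)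
qed

lemma sphere_RI: "cmod w = 1 \<Longrightarrow> (Re w)\<^sup>2 + (Im w)\<^sup>2 = 1"
  using cmod_power2[of w] by simp

lemma sphere_m1: assumes "cmod w = 1" "w \<noteq> -1" shows "-1 < Re w"
proof -
  have "\<bar>Re w\<bar> \<le> 1" using abs_Re_le_cmod[of w] assms by simp
  moreover have "Re w \<noteq> -1"
  proof
    assume "Re w = -1"
    hence "Im w = 0" using sphere_RI[OF assms(1)] by simp
    thus False using \<open>Re w = -1\<close> assms(2) by (simp add: complex_eq_iff)
  qed
  ultimately show ?thesis by linarith
qed

lemma U_cont:
  fixes u :: "real \<Rightarrow> real"
  assumes cu: "continuous_on UNIV u" and z: "\<And>x. L0 < \<bar>x\<bar> \<Longrightarrow> u x = 0" and L0: "0 \<le> L0"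
  shows "continuous_on (sphere 0 1) (\<lambda>w. if w = -1 then 0 else u (xof w))"
  unfolding continuous_on_eq_continuous_within
proof (intro ballI)
  fix w0 :: complex assume w0: "w0 \<in> sphere 0 1"
  show "continuous (at w0 within sphere 0 1) (\<lambda>w. if w = -1 then 0 else u (xof w))"
  proof (cases "w0 = -1")
    case True
    define r where "r = 1 / (1 + L0)"
    have r0: "0 < r" using L0 by (simp add: r_def)
    show ?thesis
    proof (rule continuous_transform_within[OF continuous_const r0 w0])
      fix w assume w: "w \<in> sphere 0 1" "dist w w0 < r"
      show "0 = (if w = -1 then 0 else u (xof w))"
      proof (cases "w = -1")
        case False
        have n: "cmod w = 1" using w by simp
        have RI: "(Re w)\<^sup>2 + (Im w)\<^sup>2 = 1" by (rule sphere_RI[OF n])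
        have R: "-1 < Re w" by (rule sphere_m1[OF n False])
        define s where "s = 1 + Re w"
        have s0: "0 < s" using R by (simp add: s_def)
        have "(dist w w0)\<^sup>2 = (cmod (w + 1))\<^sup>2" using True by (simp add: dist_norm)
        also have "\<dots> = (Re w + 1)\<^sup>2 + (Im w)\<^sup>2" by (simp only: cmod_power2) simp
        also have "\<dots> = 2 * s" using RI by (simp add: s_def power2_eq_square algebra_simps)
        finally have d2: "(dist w w0)\<^sup>2 = 2 * s" .
        have "(dist w w0)\<^sup>2 < r\<^sup>2" using w(2) by (simp add: power_strict_mono)
        moreover have "r\<^sup>2 \<le> 1 / (1 + L0\<^sup>2)"
        proof -
          have "1 + L0\<^sup>2 \<le> (1 + L0)\<^sup>2" using L0 by (simp add: power2_eq_square algebra_simps)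
          thus ?thesis unfolding r_def by (simp add: power_divide frac_le add_pos_nonneg)
        qed
        ultimately have "2 * s < 1 / (1 + L0\<^sup>2)" using d2 by linarith
        hence sL: "s * (1 + L0\<^sup>2) < 1" using onepx[of L0] by (simp add: field_simps)
        have "(xof w)\<^sup>2 = (Im w)\<^sup>2 / s\<^sup>2" by (simp add: xof_def s_def power_divide)
        also have "(Im w)\<^sup>2 = s * (2 - s)" using RI by (simp add: s_def power2_eq_square algebra_simps)
        finally have "(xof w)\<^sup>2 = (2 - s) / s" using s0 by (simp add: power2_eq_square)
        moreover have "L0\<^sup>2 < (2 - s) / s" using sL s0 by (simp add: field_simps)
        ultimately have "L0\<^sup>2 < (xof w)\<^sup>2" by simp
        hence "L0 < \<bar>xof w\<bar>" using L0 by (metis abs_of_nonneg power2_abs power_less_imp_less_base abs_ge_zero)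
        thus ?thesis using z False by simp
      qed simp
    qed
  next
    case False
    have n0: "cmod w0 = 1" using w0 by simp
    have R0: "1 + Re w0 \<noteq> 0" using sphere_m1[OF n0 False] by simp
    have "isCont xof w0" unfolding xof_def using R0 by (intro continuous_intros) auto
    moreover have "isCont u (xof w0)" using cu by (simp add: continuous_on_eq_continuous_at)
    ultimately have "isCont (\<lambda>w. u (xof w)) w0" by (rule isCont_o2)
    hence c: "continuous (at w0 within sphere 0 1) (\<lambda>w. u (xof w))" by (rule continuous_at_imp_continuous_at_within)
    have r0: "0 < dist w0 (-1)" using False by simp
    show ?thesis
    proof (rule continuous_transform_within[OF c r0 w0])
      fix w assume "w \<in> sphere 0 1" "dist w w0 < dist w0 (-1)"
      hence "w \<noteq> -1" by (auto simp: dist_commute)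
      thus "u (xof w) = (if w = -1 then 0 else u (xof w))" by simp
    qed
  qed
qed

lemma Acl_nth: "Acl L x = (\<Sum>j=1..length L. fst (L ! (j - 1)) * Im (1 / (complex_of_real x - snd (L ! (j - 1)))))"
proof -
  have "Acl L x = (\<Sum>i<length L. fst (L ! i) * Im (1 / (complex_of_real x - snd (L ! i))))"
    unfolding Acl_def by (subst sum_list_sum_nth) (simp add: atLeast0LessThan)
  also have "\<dots> = (\<Sum>j=Suc 0..length L. fst (L ! (j - 1)) * Im (1 / (complex_of_real x - snd (L ! (j - 1)))))"
    by (subst sum.atLeast1_atMost_eq) simp
  finally show ?thesis by simp
qed

theorem lemma5p3:
  fixes f :: "real \<Rightarrow> real" and \<epsilon> :: real
  assumes "C1c f" and "\<epsilon> > 0"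
  shows "\<exists>(N::nat) (c::nat \<Rightarrow> real) (\<eta>::nat \<Rightarrow> complex).
           (\<forall>j\<in>{1..N}. Im (\<eta> j) > 0) \<and>
           Lw_norm (\<lambda>x. f x - (\<Sum>j=1..N. c j * Im (1 / (complex_of_real x - \<eta> j))))
             < ereal \<epsilon>"
proof -
  note eps = assms(2)
  obtain D where fD: "\<And>x. (f has_real_derivative D x) (at x)" and cD: "continuous_on UNIV D"
    using assms(1) unfolding C1c_def C1_differentiable_on_def
    by (auto simp: has_real_derivative_iff_has_vector_derivative)
  have "bounded (closure {x. f x \<noteq> 0})" using assms(1) unfolding C1c_def by (simp add: compact_imp_bounded)
  then obtain L1 where L1: "\<And>x. x \<in> closure {x. f x \<noteq> 0} \<Longrightarrow> norm x \<le> L1" by (auto simp: bounded_iff)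
  define L0 where "L0 = max 0 L1"
  have L0: "0 \<le> L0" by (simp add: L0_def)
  have fz: "f x = 0" if "L0 < \<bar>x\<bar>" for x
  proof (rule ccontr)
    assume "f x \<noteq> 0"
    hence "x \<in> closure {x. f x \<noteq> 0}" by (simp add: closure_def)
    thus False using L1[of x] that by (simp add: L0_def)
  qed
  have Dz: "D x = 0" if "L0 < \<bar>x\<bar>" for x
  proof -
    have op: "open {y::real. L0 < \<bar>y\<bar>}" by (intro open_Collect_less continuous_intros)
    have "(f has_real_derivative 0) (at x)"
      by (rule has_field_derivative_transform_within_open[OF DERIV_const op]) (use that fz in auto)
    thus ?thesis by (rule DERIV_unique[OF fD[of x]])
  qed
  have cf: "continuous_on UNIV f" using fD by (meson DERIV_isCont continuous_at_imp_continuous_on)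
  define K where "K = (\<lambda>x. (1 + x\<^sup>2) * f x)"
  define K' where "K' = (\<lambda>x. 2 * x * f x + (1 + x\<^sup>2) * D x)"
  have dK: "(K has_real_derivative K' x) (at x)" for x
    unfolding K_def K'_def using fD[of x] by (auto intro!: derivative_eq_intros simp: power2_eq_square)
  define u where "u = (\<lambda>x. (1 + x\<^sup>2) * K' x)"
  have cu: "continuous_on UNIV u" unfolding u_def K'_def using cf cD by (intro continuous_intros) auto
  have uz: "u x = 0" if "L0 < \<bar>x\<bar>" for x using fz[OF that] Dz[OF that] by (simp add: u_def K'_def)
  have Kz: "K x = 0" if "L0 < \<bar>x\<bar>" for x using fz[OF that] by (simp add: K_def)
  define U where "U = (\<lambda>w. if w = -1 then 0 else u (xof w))"
  have cU: "continuous_on (sphere 0 1) U" unfolding U_def by (rule U_cont[OF cu uz L0])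
  define d1 where "d1 = \<epsilon> / 72"
  have d1: "0 < d1" using eps by (simp add: d1_def)
  obtain g where g: "trigp g" and gU: "\<And>w. w \<in> sphere 0 1 \<Longrightarrow> \<bar>U w - g w\<bar> < d1"
    using trig_approx[OF cU d1] by blast
  have ug: "\<bar>u x - g (W x)\<bar> < d1" for x
  proof -
    have "W x \<in> sphere 0 1" by simp
    moreover have "U (W x) = u x" using W_ne[of x] by (simp add: U_def)
    ultimately show ?thesis using gU by metis
  qed
  obtain F c where F: "trigp F" and dF: "\<And>x. ((\<lambda>x. F (W x)) has_real_derivative (g (W x) - c) / (1 + x\<^sup>2)) (at x)"
    using trigp_prim[OF g] by blast
  have cF: "isCont F z" for z using trigp_cont[OF F, of UNIV] by (simp add: continuous_on_eq_continuous_at)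
  define \<phi>' where "\<phi>' = (\<lambda>x. K' x - (g (W x) - c) / (1 + x\<^sup>2))"
  have d\<phi>: "((\<lambda>x. K x - F (W x)) has_real_derivative \<phi>' x) (at x)" for x
    unfolding \<phi>'_def by (rule DERIV_diff[OF dK dF])
  have e\<phi>: "(1 + x\<^sup>2) * \<phi>' x = u x - g (W x) + c" for x
    using onepx[of x] by (simp add: \<phi>'_def u_def field_simps)
  have FWt: "((\<lambda>y. F (W y)) \<longlongrightarrow> F (-1)) at_top" by (rule isCont_tendsto_compose[OF cF W_top])
  have FWb: "((\<lambda>y. F (W (-y))) \<longlongrightarrow> F (-1)) at_top"
    by (rule isCont_tendsto_compose[OF cF filterlim_compose[OF W_bot filterlim_uminus_at_bot_at_top]])
  have lim0: "((\<lambda>y. (K y - F (W y)) - (K (-y) - F (W (-y)))) \<longlongrightarrow> 0) at_top"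
  proof -
    have "((\<lambda>y. - (F (W y) - F (W (-y)))) \<longlongrightarrow> - (F (-1) - F (-1))) at_top"
      by (intro tendsto_intros FWt FWb)
    hence l: "((\<lambda>y. - (F (W y) - F (W (-y)))) \<longlongrightarrow> 0) at_top" by simp
    moreover have "eventually (\<lambda>y. - (F (W y) - F (W (-y))) = (K y - F (W y)) - (K (-y) - F (W (-y)))) at_top"
      using eventually_gt_at_top[of L0]
      by eventually_elim (use Kz in auto)
    with l show ?thesis by (rule Lim_transform_eventually)
  qed
  have cb: "\<bar>c\<bar> \<le> d1"
  proof (rule ccontr)
    assume "\<not> \<bar>c\<bar> \<le> d1"
    hence "d1 < c \<or> c < - d1" by linarith
    thus False
    proof
      assume c: "d1 < c"
      show False
      proof (rule no_pos_deriv[OF d\<phi> _ _ lim0])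
        show "c - d1 \<le> (1 + x\<^sup>2) * \<phi>' x" for x using ug[of x] e\<phi>[of x] by linarith
      qed (use c in simp)
    next
      assume c: "c < - d1"
      have lim1: "((\<lambda>y. (- (K y - F (W y))) - (- (K (-y) - F (W (-y))))) \<longlongrightarrow> 0) at_top"
      proof (rule Lim_transform_eventually)
        show "((\<lambda>y. - ((K y - F (W y)) - (K (-y) - F (W (-y))))) \<longlongrightarrow> 0) at_top"
          using tendsto_minus[OF lim0] by (simp only: minus_zero)
        show "\<forall>\<^sub>F y in at_top. - ((K y - F (W y)) - (K (-y) - F (W (-y)))) = (- (K y - F (W y))) - (- (K (-y) - F (W (-y))))"
          by (intro always_eventually allI) simp
      qed
      show False
      proof (rule no_pos_deriv[OF DERIV_minus[OF d\<phi>] _ _ lim1])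
        show "- c - d1 \<le> (1 + x\<^sup>2) * - \<phi>' x" for x using ug[of x] e\<phi>[of x] by linarith
      qed (use c in simp)
    qed
  qed
  define T where "T = (\<lambda>w. F w + - F (-1))"
  have T: "trigp T" unfolding T_def by (rule trigp.add[OF F trigp_const])
  have sm1: "small (8 * d1) (\<lambda>x. K x - T (W x))"
  proof -
    have d1': "((\<lambda>x. K x - T (W x)) has_real_derivative \<phi>' x) (at x)" for x
    proof -
      have eq: "(\<lambda>x. K x - T (W x)) = (\<lambda>x. (K x - F (W x)) + F (-1))" by (simp add: T_def fun_eq_iff)
      show ?thesis unfolding eq using DERIV_add[OF d\<phi>[of x] DERIV_const[of "F (-1)"]] by simp
    qed
    have b1: "(1 + x\<^sup>2) * \<bar>\<phi>' x\<bar> \<le> 2 * d1" for x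
    proof -
      have "(1 + x\<^sup>2) * \<bar>\<phi>' x\<bar> = \<bar>(1 + x\<^sup>2) * \<phi>' x\<bar>" using onepx[of x] by (simp add: abs_mult)
      thus ?thesis using e\<phi>[of x] ug[of x] cb by linarith
    qed
    have l1: "((\<lambda>x. K x - T (W x)) \<longlongrightarrow> 0) at_top"
    proof -
      have "((\<lambda>x. - (F (W x) + - F (-1))) \<longlongrightarrow> - (F (-1) + - F (-1))) at_top"
        by (intro tendsto_intros FWt)
      hence l: "((\<lambda>x. - (F (W x) + - F (-1))) \<longlongrightarrow> 0) at_top" by simp
      moreover have "eventually (\<lambda>x. - (F (W x) + - F (-1)) = K x - T (W x)) at_top"
        using eventually_gt_at_top[of L0] by eventually_elim (use Kz in \<open>auto simp: T_def\<close>)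
      with l show ?thesis by (rule Lim_transform_eventually)
    qed
    have "\<bar>K x - T (W x)\<bar> \<le> 8 * d1" for x
    proof -
      have "\<bar>K x - T (W x)\<bar> \<le> 2 * d1 * (pi/2 - arctan x)" by (rule tail_top[OF d1' b1 l1])
      also have "\<dots> \<le> 2 * d1 * 4"
      proof (rule mult_left_mono)
        show "pi/2 - arctan x \<le> 4" using arctan_lbound[of x] pi_less_4 by linarith
      qed (use d1 in simp)
      finally show ?thesis by simp
    qed
    moreover have "(1 + x\<^sup>2) * \<bar>\<phi>' x\<bar> \<le> 8 * d1" for x using b1[of x] d1 by linarith
    ultimately show ?thesis unfolding small_def using d1' by blast
  qed
  obtain L where vL: "valid L" and sm2: "small d1 (\<lambda>x. T (W x) - (1 + x\<^sup>2) * Acl L x)"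
    using trigp_ApproxT[OF T] d1 unfolding ApproxT_def by blast
  have sm: "small (8 * d1 + d1) (\<lambda>x. (1 + x\<^sup>2) * (f x - Acl L x))"
    by (rule small_cong[OF small_add[OF sm1 sm2]]) (simp add: K_def algebra_simps)
  then obtain \<Phi>' where d\<Phi>: "\<And>x. ((\<lambda>x. (1 + x\<^sup>2) * (f x - Acl L x)) has_real_derivative \<Phi>' x) (at x)"
    and b\<Phi>: "\<And>x. \<bar>(1 + x\<^sup>2) * (f x - Acl L x)\<bar> \<le> 9 * d1" "\<And>x. (1 + x\<^sup>2) * \<bar>\<Phi>' x\<bar> \<le> 9 * d1"
    unfolding small_def by auto
  define \<Phi> where "\<Phi> = (\<lambda>x. (1 + x\<^sup>2) * (f x - Acl L x))"
  define h where "h = (\<lambda>x. f x - Acl L x)"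
  have h\<Phi>: "h = (\<lambda>x. \<Phi> x / (1 + x\<^sup>2))"
  proof (rule ext)
    fix x :: real
    have nz: "1 + x\<^sup>2 \<noteq> 0" using onepx[of x] by linarith
    show "h x = \<Phi> x / (1 + x\<^sup>2)" using nz by (simp add: h_def \<Phi>_def)
  qed
  define h' where "h' = (\<lambda>x. (\<Phi>' x * (1 + x\<^sup>2) - \<Phi> x * (2 * x)) / ((1 + x\<^sup>2) * (1 + x\<^sup>2)))"
  have dh: "(h has_real_derivative h' x) (at x)" for x
  proof -
    have "((\<lambda>x. 1 + x\<^sup>2) has_real_derivative 2 * x) (at x)"
      by (auto intro!: derivative_eq_intros)
    from DERIV_divide[OF d\<Phi>[of x, folded \<Phi>_def] this] show ?thesis
      unfolding h\<Phi> h'_def using onepx[of x] by simp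
  qed
  have bh: "(1 + x\<^sup>2) * \<bar>h' x\<bar> \<le> 18 * d1" for x
  proof -
    have p: "0 < 1 + x\<^sup>2" by (rule onepx)
    have nz: "1 + x\<^sup>2 \<noteq> 0" using p by linarith
    have e: "h' x = (\<Phi>' x - \<Phi> x * (2 * x / (1 + x\<^sup>2))) / (1 + x\<^sup>2)"
      using nz by (simp add: h'_def field_simps)
    have "(1 + x\<^sup>2) * \<bar>h' x\<bar> = \<bar>\<Phi>' x - \<Phi> x * (2 * x / (1 + x\<^sup>2))\<bar>"
      unfolding e using p by (simp add: abs_divide)
    also have "\<dots> \<le> \<bar>\<Phi>' x\<bar> + \<bar>\<Phi> x\<bar> * \<bar>2 * x / (1 + x\<^sup>2)\<bar>" by (subst abs_mult[symmetric]) (rule abs_triangle_ineq4)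
    also have "\<dots> \<le> 9 * d1 + 9 * d1 * 1"
    proof (rule add_mono)
      have "\<bar>\<Phi>' x\<bar> \<le> (1 + x\<^sup>2) * \<bar>\<Phi>' x\<bar>" using p by (simp add: mult_le_cancel_right1) 
      thus "\<bar>\<Phi>' x\<bar> \<le> 9 * d1" using b\<Phi>(2)[of x] by linarith
      have "\<bar>2 * x / (1 + x\<^sup>2)\<bar> \<le> 1"
      proof -
        have "2 * \<bar>x\<bar> \<le> 1 + x\<^sup>2" using sum_squares_bound[of 1 "\<bar>x\<bar>"]
          by (simp add: power2_eq_square)
        thus ?thesis using p by (simp add: abs_divide abs_mult)
      qed
      thus "\<bar>\<Phi> x\<bar> * \<bar>2 * x / (1 + x\<^sup>2)\<bar> \<le> 9 * d1 * 1"
        using b\<Phi>(1)[of x] unfolding \<Phi>_def by (intro mult_mono) auto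
    qed
    finally show ?thesis by simp
  qed
  have hb: "norm (h x) \<le> 9 * d1 / (1 + x\<^sup>2)" for x
  proof -
    have "\<bar>(1 + x\<^sup>2) * (f x - Acl L x)\<bar> = (1 + x\<^sup>2) * \<bar>f x - Acl L x\<bar>"
      by (simp only: abs_mult abs_of_pos[OF onepx])
    hence "(1 + x\<^sup>2) * \<bar>f x - Acl L x\<bar> \<le> 9 * d1" using b\<Phi>(1)[of x] by simp
    thus ?thesis unfolding h_def using onepx[of x] by (simp add: pos_le_divide_eq mult.commute)
  qed
  have lt: "(h \<longlongrightarrow> 0) at_top"
    by (rule Lim_null_comparison[OF always_eventually[OF allI[OF hb]]]) real_asymp
  have lb: "(h \<longlongrightarrow> 0) at_bot"
    by (rule Lim_null_comparison[OF always_eventually[OF allI[OF hb]]]) real_asymp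
  have "Lw_norm h \<le> ereal (2 * (18 * d1))" by (rule Lw_bound[OF dh bh lt lb])
  also have "\<dots> < ereal \<epsilon>" using eps by (simp add: d1_def)
  finally have main: "Lw_norm h < ereal \<epsilon>" .
  define N where "N = length L"
  define cc where "cc = (\<lambda>j. fst (L ! (j - 1)))"
  define ee where "ee = (\<lambda>j. snd (L ! (j - 1)))"
  have "\<forall>j\<in>{1..N}. Im (ee j) > 0"
  proof
    fix j assume "j \<in> {1..N}"
    hence "j - 1 < length L" by (auto simp: N_def)
    hence "L ! (j - 1) \<in> set L" by (rule nth_mem)
    thus "Im (ee j) > 0" using vL by (simp add: valid_def ee_def)
  qed
  moreover have "h = (\<lambda>x. f x - (\<Sum>j=1..N. cc j * Im (1 / (complex_of_real x - ee j))))"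
    unfolding h_def N_def cc_def ee_def by (simp add: Acl_nth)
  ultimately show ?thesis using main by blast
qed

end
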